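(* Let $d,N\ge 1$ be integers, let $\mathbb{K},\mathbb{M}$ be real skew-symmetric $d\times d$ matrices, let $S:\mathbb{R}^d\to\mathbb{R}$ be smooth, and let $\mathcal{D}_h$ be a real skew-symmetric $N\times N$ matrix; put $\mathcal{C}_h=\mathcal{D}_h\otimes\mathbb{I}_d$. Let $z_h(t)\in\mathbb{R}^{dN}$ be a differentiable solution of $$(\mathbb{I}_N\otimes\mathbb{K})\,\frac{dz_h}{dt}(t)+(\mathcal{D}_h\otimes\mathbb{M})\,z_h(t)=\nabla\widetilde S_h\big(z_h(t)\big),$$ where $\widetilde S_h(z)=\sum_{j=0}^{N-1}S(z_j)$ for $z=(z_0,\dots,z_{N-1})$, $z_j\in\mathbb{R}^d$. Define $$\mathcal{I}_h(t)=\tfrac12\, z_h(t)^{\top}(\mathcal{D}_h\otimes\mathbb{K})\,z_h(t),\qquad \mathfrak{M}_h(t)=\widetilde S_h\big(z_h(t)\big)-\tfrac12\, z_h(t)^{\top}(\mathbb{I}_N\otimes\mathbb{K})\,\frac{dz_h}{dt}(t).$$ Then $$\frac{d\mathcal{I}_h}{dt}+\nabla_h\mathfrak{M}_h=0,$$ where $\nabla_h$ is the discrete spatial derivative described in the context.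
   Context: $\otimes$ is the Kronecker product, $\mathbb{I}_n$ the $n\times n$ identity. The discrete gradient is defined for smooth $Q:\mathbb{R}^{dN}\to\mathbb{R}$ by $\nabla_h Q(z)=\nabla Q(z)^{\top}\mathcal{C}_h z$ (chain rule with $\partial_x$ of the state replaced by $\mathcal{C}_h z$); for a quantity also involving $\dot z=dz_h/dt$, each occurrence of the state (including in $\dot z$) is differentiated this way, so explicitly $\nabla_h\mathfrak{M}_h=\nabla\widetilde S_h(z_h)^{\top}\mathcal{C}_h z_h-\tfrac12(\mathcal{C}_h z_h)^{\top}(\mathbb{I}_N\otimes\mathbb{K})\dot z_h-\tfrac12 z_h^{\top}(\mathbb{I}_N\otimes\mathbb{K})\,\mathcal{C}_h\dot z_h$. *)

theory Defs
  imports "HOL-Analysis.Analysis"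
begin

text \<open>Vectors in R^{dN} are indexed by pairs (j,a) with j the grid index (N values)
 and a the component index (d values); (j,a) corresponds to the flat index j*d+a.\<close>

definition kron :: "real^'n::finite^'n \<Rightarrow> real^'d::finite^'d \<Rightarrow> real^('n \<times> 'd)^('n \<times> 'd)" where
  "kron A B = (\<chi> p q. A $ fst p $ fst q * B $ snd p $ snd q)"

definition block :: "real^('n::finite \<times> 'd::finite) \<Rightarrow> 'n \<Rightarrow> real^'d" where
  "block z j = (\<chi> a. z $ (j, a))"

definition Stilde :: "(real^'d::finite \<Rightarrow> real) \<Rightarrow> real^('n::finite \<times> 'd) \<Rightarrow> real" where
  "Stilde S z = (\<Sum>j\<in>UNIV. S (block z j))"

definition grad :: "(real^'m \<Rightarrow> real) \<Rightarrow> real^'m \<Rightarrow> real^'m" where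
  "grad f x = (\<chi> i. frechet_derivative f (at x) (axis i 1))"

definition skew :: "real^'m^'m \<Rightarrow> bool" where
  "skew A \<longleftrightarrow> transpose A = - A"

end

theory Submission
  imports Defs
begin

lemma inner_mv: "(x::real^'m::finite) \<bullet> (A *v y) = y \<bullet> (transpose A *v x)"
  by (simp add: inner_vec_def matrix_vector_mult_def transpose_def sum_distrib_left
      sum_distrib_right mult_ac) (rule sum.swap)

lemma kron_transpose: "transpose (kron A B) = kron (transpose A) (transpose B)"
  by (simp add: kron_def transpose_def)

lemma kron_mult: "kron A B ** kron C E = kron (A ** C) (B ** E)"
proof -
  have *: "(\<Sum>r\<in>UNIV. A $ fst p $ fst r * B $ snd p $ snd r * (C $ fst r $ fst q * E $ snd r $ snd q))
     = (\<Sum>r1\<in>UNIV. A $ fst p $ r1 * C $ r1 $ fst q) * (\<Sum>r2\<in>UNIV. B $ snd p $ r2 * E $ r2 $ snd q)"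
    for p :: "'a::finite \<times> 'b::finite" and q :: "'a \<times> 'b"
  proof -
    have "(\<Sum>r1\<in>UNIV. A $ fst p $ r1 * C $ r1 $ fst q) * (\<Sum>r2\<in>UNIV. B $ snd p $ r2 * E $ r2 $ snd q)
       = (\<Sum>r1\<in>UNIV. \<Sum>r2\<in>UNIV. (A $ fst p $ r1 * C $ r1 $ fst q) * (B $ snd p $ r2 * E $ r2 $ snd q))"
      by (rule sum_product)
    also have "\<dots> = (\<Sum>(r1,r2)\<in>UNIV \<times> UNIV. (A $ fst p $ r1 * C $ r1 $ fst q) * (B $ snd p $ r2 * E $ r2 $ snd q))"
      by (rule sum.cartesian_product)
    also have "\<dots> = (\<Sum>r\<in>UNIV. A $ fst p $ fst r * B $ snd p $ snd r * (C $ fst r $ fst q * E $ snd r $ snd q))"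
      by (simp only: UNIV_Times_UNIV) (rule sum.cong, auto simp: mult_ac split_beta)
    finally show ?thesis by simp
  qed
  show ?thesis
    unfolding kron_def matrix_matrix_mult_def vec_eq_iff
    by (simp only: vec_lambda_beta *, simp)
qed

lemma kron_uminus1: "kron (- A) B = - kron A B"
  by (simp add: kron_def vec_eq_iff)

lemma kron_uminus2: "kron A (- B) = - kron A B"
  by (simp add: kron_def vec_eq_iff)

lemma uminus_mv: "(- X) *v (x::real^'m::finite) = - (X *v x)"
  by (simp add: vec_eq_iff matrix_vector_mult_def sum_negf)

lemma mm_lneg: "(- A) ** (B::real^'m::finite^'k::finite) = - (A ** B)"
  by (simp add: vec_eq_iff matrix_matrix_mult_def sum_negf)

lemma mm_rneg: "A ** (- B::real^'m::finite^'k::finite) = - (A ** B)"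
  by (simp add: vec_eq_iff matrix_matrix_mult_def sum_negf)

lemma skew_quad: "transpose X = - X \<Longrightarrow> (x::real^'m::finite) \<bullet> (X *v x) = 0"
  using inner_mv[of x X x] by (simp add: uminus_mv)

theorem theorem3:
  fixes K M :: "real^'d^'d" and D :: "real^'n^'n"
    and S :: "real^'d \<Rightarrow> real"
    and z z' :: "real \<Rightarrow> real^('n \<times> 'd)"
    and T :: "real set"
  assumes skK: "skew K" and skM: "skew M" and skD: "skew D"
    and S_smooth: "\<And>x. S differentiable (at x)"
    and T_open: "open T"
    and z_deriv: "\<And>t. t \<in> T \<Longrightarrow> (z has_vector_derivative z' t) (at t)"
    and eqn: "\<And>t. t \<in> T \<Longrightarrow>
       kron (mat 1) K *v z' t + kron D M *v z t = grad (Stilde S) (z t)"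
    and t_in: "t \<in> T"
  shows "((\<lambda>s. (1/2) * (z s \<bullet> (kron D K *v z s))) has_real_derivative
           - (grad (Stilde S) (z t) \<bullet> (kron D (mat 1) *v z t)
              - (1/2) * ((kron D (mat 1) *v z t) \<bullet> (kron (mat 1) K *v z' t))
              - (1/2) * (z t \<bullet> (kron (mat 1) K *v (kron D (mat 1) *v z' t))))) (at t)"
proof -
  let ?A = "kron D K" and ?IK = "kron (mat 1 :: real^'n^'n) K" and ?C = "kron D (mat 1 :: real^'d^'d)"
    and ?B = "kron D M"
  have tD: "transpose D = - D" and tK: "transpose K = - K" and tM: "transpose M = - M"
    using skK skM skD by (auto simp: skew_def)
  have tA: "transpose ?A = ?A" by (simp add: kron_transpose tD tK kron_uminus1 kron_uminus2)
  have zd: "(z has_derivative (\<lambda>h. h *\<^sub>R z' t)) (at t)"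
    using z_deriv[OF t_in] by (simp add: has_vector_derivative_def)
  have zd2: "((\<lambda>s. ?A *v z s) has_derivative (\<lambda>h. ?A *v (h *\<^sub>R z' t))) (at t)"
    using bounded_linear.has_derivative[OF matrix_vector_mul_bounded_linear zd] .
  have "((\<lambda>s. z s \<bullet> (?A *v z s)) has_derivative
      (\<lambda>h. z t \<bullet> (?A *v (h *\<^sub>R z' t)) + (h *\<^sub>R z' t) \<bullet> (?A *v z t))) (at t)"
    using has_derivative_inner[OF zd zd2] by simp
  moreover have "\<And>h. z t \<bullet> (?A *v (h *\<^sub>R z' t)) + (h *\<^sub>R z' t) \<bullet> (?A *v z t)
      = h * (2 * (z t \<bullet> (?A *v z' t)))"
    using inner_mv[of "z' t" ?A "z t"] tA
    by (simp add: matrix_vector_mult_scaleR algebra_simps)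
  ultimately have d1: "((\<lambda>s. z s \<bullet> (?A *v z s)) has_real_derivative 2 * (z t \<bullet> (?A *v z' t))) (at t)"
    by (simp add: has_field_derivative_def mult_commute_abs)
  have CtIK: "transpose ?C ** ?IK = - ?A"
    by (simp add: kron_transpose kron_mult tD kron_uminus1 mm_lneg)
  have e1: "(?IK *v z' t) \<bullet> (?C *v z t) = - (z t \<bullet> (?A *v z' t))"
    using inner_mv[of "?IK *v z' t" ?C "z t"]
    by (simp add: matrix_vector_mul_assoc CtIK uminus_mv)
  have BtC: "transpose (transpose ?B ** ?C) = - (transpose ?B ** ?C)"
    by (simp add: kron_transpose kron_mult tD tM kron_uminus1 kron_uminus2 matrix_transpose_mul mm_lneg mm_rneg)
  have e2: "(?B *v z t) \<bullet> (?C *v z t) = 0"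
    using inner_mv[of "?C *v z t" ?B "z t"] skew_quad[OF BtC, of "z t"]
    by (simp add: matrix_vector_mul_assoc inner_commute)
  have e3: "(?C *v z t) \<bullet> (?IK *v z' t) = - (z t \<bullet> (?A *v z' t))"
    using e1 by (simp add: inner_commute)
  have e4: "z t \<bullet> (?IK *v (?C *v z' t)) = z t \<bullet> (?A *v z' t)"
    by (simp add: matrix_vector_mul_assoc kron_mult)
  have g: "grad (Stilde S) (z t) = ?IK *v z' t + ?B *v z t" using eqn[OF t_in] by simp
  have "(1/2) * (2 * (z t \<bullet> (?A *v z' t))) = - (grad (Stilde S) (z t) \<bullet> (?C *v z t)
              - (1/2) * ((?C *v z t) \<bullet> (?IK *v z' t))
              - (1/2) * (z t \<bullet> (?IK *v (?C *v z' t))))"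
    unfolding g inner_add_left e1 e2 e3 e4 by simp
  note eqv = this
  note d2 = DERIV_cmult[OF d1, of "1/2"]
  show ?thesis using d2[unfolded eqv] .
qed

end
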